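(* Let $n\ge1$, let $u(z)$ be a scalar function and $\mathbf v(z)\in\mathbb R^n$ a vector function (column vector), let $A$ be a constant real skew-symmetric $n\times n$ matrix and $\beta$ a constant. Define the block matrices of block size $(1,1,n,1)\times(1,1,n,1)$ \[ {\cal B}_0=\begin{pmatrix} -1 & 0 & 0 & 0\\ 0 & 0 & 0 & 0\\ 0 & 0 & 0 & 0\\ 0 & 0 & 0 & 1 \end{pmatrix},\quad {\cal B}_1=\begin{pmatrix} 0 & 1 & 0 & 0\\ u & 0 & 0 & 1\\ \mathbf v & 0 & 0 & 0\\ 0 & u & \mathbf v^T & 0 \end{pmatrix},\quad {\cal B}_2= \begin{pmatrix} u & 0 & 0 & 0\\ u' & 0 & \mathbf v^T & 0\\ \mathbf v' & -\mathbf v & 0 & 0\\ 0 & u' & (\mathbf v')^T & -u \end{pmatrix}, \] and ${\cal B}=\zeta{\cal B}_0+{\cal B}_1$, where $\zeta$ is a spectral parameter. Then: (a) The system $u''=\frac32u^2-\frac32(\mathbf v,\mathbf v)+\beta$, $\mathbf v'''=3u\mathbf v'+3u'\mathbf v+A\mathbf v$ admits the isospectral Lax pair ${\cal A}'=[{\cal B},{\cal A}]$ with ${\cal A}=\zeta^3{\cal B}_0+\zeta^2{\cal B}_1+\zeta{\cal B}_2+{\cal B}_3$, where \[ {\cal B}_3= \begin{pmatrix} u' & -u & \mathbf v^T & 0\\ \frac{1}{2}u^2-\frac{1}{2}(\mathbf v,\mathbf v)+\beta & 0 & (\mathbf v')^T & -u\\ \mathbf v''-2u\mathbf v & -\mathbf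 v' & -A & \mathbf v\\ 0 & \frac{1}{2}u^2-\frac{1}{2}(\mathbf v,\mathbf v)+\beta & (\mathbf v'')^T-2u\mathbf v^T & -u' \end{pmatrix}. \] (b) The system $u''=\frac32u^2-\frac32(\mathbf v,\mathbf v)+z$, $\mathbf v'''=3u\mathbf v'+3u'\mathbf v+A\mathbf v$ admits the isomonodromic Lax pair ${\cal A}'={\cal B}_\zeta+[{\cal B},{\cal A}]$ with ${\cal A}=\zeta^4{\cal B}_0+\zeta^3{\cal B}_1+\zeta^2{\cal B}_2+\zeta{\cal B}_3+{\cal B}_4$, where \[ {\cal B}_3= \begin{pmatrix} u' & -u & \mathbf v^T & 0\\ \frac{1}{2}u^2-\frac{1}{2}(\mathbf v,\mathbf v)+z & 0 & (\mathbf v')^T & -u\\ \mathbf v''-2u\mathbf v & -\mathbf v' & -A & \mathbf v\\ 0 & \frac{1}{2}u^2-\frac{1}{2}(\mathbf v,\mathbf v)+z & (\mathbf v'')^T-2u\mathbf v^T & -u' \end{pmatrix},\quad {\cal B}_4=\begin{pmatrix} 0 & 0 & 0 & 0\\ 1 & 0 & 0 & 0\\ 0 & 0 & 0 & 0\\ 0 & 1 & 0 & 0 \end{pmatrix}. \] (c) The system $u'''=3uu'-3(\mathbf v,\mathbf v')+zu'+2u$, $\mathbf v'''=3u\mathbf v'+3u'\mathbf v+z\mathbf v'+(A+2)\mathbf v$ admits the isomonodromic Lax pair ${\cal A}'={\cal B}_\zeta+[{\cal B},{\cal A}]$ with ${\cal A}=-(\zeta-z\zeta^{-1}){\cal B}-{\cal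 B}_2-\zeta^{-1}{\cal B}_3$, where \[ {\cal B}_3= \begin{pmatrix} u'+1 & -u & \mathbf v^T & 0\\ u''-u^2+(\mathbf v,\mathbf v) & 0 & (\mathbf v')^T & -u\\ \mathbf v''-2u\mathbf v & -\mathbf v' & -A & \mathbf v\\ 0 & u''-u^2+(\mathbf v,\mathbf v) & (\mathbf v'')^T-2u\mathbf v^T & -u'-1 \end{pmatrix}. \]
   Context: Primes denote derivatives with respect to $z$; $\zeta$ is independent of $z$; $(\cdot,\cdot)$ is the standard scalar product on $\mathbb R^n$; in (c), $A+2$ means $A+2I_n$. "Admits the Lax pair" means the stated matrix equation holds by virtue of the system. *)

theory Defs
  imports "HOL-Analysis.Analysis"
begin

text \<open>Index set of the (n+3) x (n+3) block matrices with block sizes (1,1,n,1):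
  I0 = first row/column, I1 = second, IV k = k-th index of the middle n-block, I3 = last.\<close>
datatype 'n idx = I0 | I1 | IV 'n | I3

type_synonym ('n) bmat = "'n idx \<Rightarrow> 'n idx \<Rightarrow> real"

definition mmul :: "'n bmat \<Rightarrow> 'n bmat \<Rightarrow> 'n bmat" where
  "mmul X Y = (\<lambda>i j. \<Sum>k\<in>UNIV. X i k * Y k j)"

definition comm :: "'n bmat \<Rightarrow> 'n bmat \<Rightarrow> 'n bmat" where
  "comm X Y = (\<lambda>i j. mmul X Y i j - mmul Y X i j)"

text \<open>Block matrix with blocks
  [a11 a12 r13^T a14; a21 a22 r23^T a24; c31 c32 M33 c34; a41 a42 r43^T a44],
  where r13, r23, r43 are row vectors (given as vectors), c31, c32, c34 column vectors.\<close>
definition blockm ::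
  "real \<Rightarrow> real \<Rightarrow> real^('n::finite) \<Rightarrow> real \<Rightarrow>
   real \<Rightarrow> real \<Rightarrow> real^'n \<Rightarrow> real \<Rightarrow>
   real^'n \<Rightarrow> real^'n \<Rightarrow> real^'n^'n \<Rightarrow> real^'n \<Rightarrow>
   real \<Rightarrow> real \<Rightarrow> real^'n \<Rightarrow> real \<Rightarrow> 'n bmat" where
  "blockm a11 a12 r13 a14 a21 a22 r23 a24 c31 c32 M33 c34 a41 a42 r43 a44 =
    (\<lambda>i j. case i of
        I0 \<Rightarrow> (case j of I0 \<Rightarrow> a11 | I1 \<Rightarrow> a12 | IV l \<Rightarrow> r13 $ l | I3 \<Rightarrow> a14)
      | I1 \<Rightarrow> (case j of I0 \<Rightarrow> a21 | I1 \<Rightarrow> a22 | IV l \<Rightarrow> r23 $ l | I3 \<Rightarrow> a24)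
      | IV k \<Rightarrow> (case j of I0 \<Rightarrow> c31 $ k | I1 \<Rightarrow> c32 $ k | IV l \<Rightarrow> M33 $ k $ l | I3 \<Rightarrow> c34 $ k)
      | I3 \<Rightarrow> (case j of I0 \<Rightarrow> a41 | I1 \<Rightarrow> a42 | IV l \<Rightarrow> r43 $ l | I3 \<Rightarrow> a44))"

definition B0 :: "('n::finite) bmat" where
  "B0 = blockm (-1) 0 0 0  0 0 0 0  0 0 0 0  0 0 0 1"

definition B1 :: "real \<Rightarrow> real^('n::finite) \<Rightarrow> 'n bmat" where
  "B1 u v = blockm 0 1 0 0  u 0 0 1  v 0 0 0  0 u v 0"

definition B2 :: "real \<Rightarrow> real \<Rightarrow> real^('n::finite) \<Rightarrow> real^'n \<Rightarrow> 'n bmat" where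
  "B2 u u' v v' = blockm u 0 0 0  u' 0 v 0  v' (-v) 0 0  0 u' v' (-u)"

text \<open>B3 of parts (a) and (b); the parameter b is beta in (a) and z in (b).\<close>
definition B3ab :: "real^('n::finite)^'n \<Rightarrow> real \<Rightarrow> real \<Rightarrow> real \<Rightarrow> real^'n \<Rightarrow> real^'n \<Rightarrow> real^'n \<Rightarrow> 'n bmat" where
  "B3ab A b u u' v v' v'' =
    (let w = u^2/2 - inner v v / 2 + b in
     blockm u' (-u) v 0
            w 0 v' (-u)
            (v'' - (2*u) *\<^sub>R v) (-v') (-A) v
            0 w (v'' - (2*u) *\<^sub>R v) (-u'))"

definition B4 :: "('n::finite) bmat" where
  "B4 = blockm 0 0 0 0  1 0 0 0  0 0 0 0  0 1 0 0"

definition B3c :: "real^('n::finite)^'n \<Rightarrow> real \<Rightarrow> real \<Rightarrow> real \<Rightarrow> real^'n \<Rightarrow> real^'n \<Rightarrow> real^'n \<Rightarrow> 'n bmat" where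
  "B3c A u u' u'' v v' v'' =
    (let w = u'' - u^2 + inner v v in
     blockm (u' + 1) (-u) v 0
            w 0 v' (-u)
            (v'' - (2*u) *\<^sub>R v) (-v') (-A) v
            0 w (v'' - (2*u) *\<^sub>R v) (-u' - 1))"

definition Bfull :: "real \<Rightarrow> real^('n::finite) \<Rightarrow> real \<Rightarrow> 'n bmat" where
  "Bfull u v \<zeta> = (\<lambda>i j. \<zeta> * B0 i j + B1 u v i j)"

end

theory Submission
  imports Defs
begin


lemma UNIV_idx: "(UNIV :: ('n::finite) idx set) = insert I0 (insert I1 (insert I3 (range IV)))"
  apply auto apply (case_tac x) apply auto done

lemma sum_idx: "(\<Sum>k\<in>(UNIV :: ('n::finite) idx set). f k) = f I0 + f I1 + (\<Sum>l\<in>UNIV. f (IV l)) + f I3"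
  unfolding UNIV_idx by (simp add: sum.reindex inj_on_def algebra_simps image_iff)

definition outer :: "real^('n::finite) \<Rightarrow> real^'n \<Rightarrow> real^'n^'n" where
  "outer x y = (\<chi> k l. x$k * y$l)"

lemma mmul_blockm:
  "mmul (blockm a11 a12 r13 a14 a21 a22 r23 a24 c31 c32 M c34 a41 a42 r43 a44)
        (blockm b11 b12 s13 b14 b21 b22 s23 b24 d31 d32 N d34 b41 b42 s43 b44) =
   blockm (a11*b11 + a12*b21 + inner r13 d31 + a14*b41)
          (a11*b12 + a12*b22 + inner r13 d32 + a14*b42)
          (a11 *\<^sub>R s13 + a12 *\<^sub>R s23 + r13 v* N + a14 *\<^sub>R s43)
          (a11*b14 + a12*b24 + inner r13 d34 + a14*b44)
          (a21*b11 + a22*b21 + inner r23 d31 + a24*b41)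
          (a21*b12 + a22*b22 + inner r23 d32 + a24*b42)
          (a21 *\<^sub>R s13 + a22 *\<^sub>R s23 + r23 v* N + a24 *\<^sub>R s43)
          (a21*b14 + a22*b24 + inner r23 d34 + a24*b44)
          (b11 *\<^sub>R c31 + b21 *\<^sub>R c32 + M *v d31 + b41 *\<^sub>R c34)
          (b12 *\<^sub>R c31 + b22 *\<^sub>R c32 + M *v d32 + b42 *\<^sub>R c34)
          (outer c31 s13 + outer c32 s23 + M ** N + outer c34 s43)
          (b14 *\<^sub>R c31 + b24 *\<^sub>R c32 + M *v d34 + b44 *\<^sub>R c34)
          (a41*b11 + a42*b21 + inner r43 d31 + a44*b41)
          (a41*b12 + a42*b22 + inner r43 d32 + a44*b42)
          (a41 *\<^sub>R s13 + a42 *\<^sub>R s23 + r43 v* N + a44 *\<^sub>R s43)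
          (a41*b14 + a42*b24 + inner r43 d34 + a44*b44)"
  unfolding mmul_def
  apply (rule ext)+
  subgoal for i j
    by (cases i; cases j; simp add: sum_idx blockm_def inner_vec_def outer_def
        matrix_vector_mult_def vector_matrix_mult_def matrix_matrix_mult_def algebra_simps)
  done

lemma blockm_add: "blockm a11 a12 r13 a14 a21 a22 r23 a24 c31 c32 M c34 a41 a42 r43 a44 i j + blockm b11 b12 s13 b14 b21 b22 s23 b24 d31 d32 N d34 b41 b42 s43 b44 i j = blockm (a11 + b11) (a12 + b12) (r13 + s13) (a14 + b14) (a21 + b21) (a22 + b22) (r23 + s23) (a24 + b24) (c31 + d31) (c32 + d32) (M + N) (c34 + d34) (a41 + b41) (a42 + b42) (r43 + s43) (a44 + b44) i j"
  by (cases i; cases j; simp add: blockm_def)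
lemma blockm_diff: "blockm a11 a12 r13 a14 a21 a22 r23 a24 c31 c32 M c34 a41 a42 r43 a44 i j - blockm b11 b12 s13 b14 b21 b22 s23 b24 d31 d32 N d34 b41 b42 s43 b44 i j = blockm (a11 - b11) (a12 - b12) (r13 - s13) (a14 - b14) (a21 - b21) (a22 - b22) (r23 - s23) (a24 - b24) (c31 - d31) (c32 - d32) (M - N) (c34 - d34) (a41 - b41) (a42 - b42) (r43 - s43) (a44 - b44) i j"
  by (cases i; cases j; simp add: blockm_def)
lemma blockm_scale: "c * blockm a11 a12 r13 a14 a21 a22 r23 a24 c31 c32 M c34 a41 a42 r43 a44 i j = blockm (c * a11) (c * a12) (c *\<^sub>R r13) (c * a14) (c * a21) (c * a22) (c *\<^sub>R r23) (c * a24) (c *\<^sub>R c31) (c *\<^sub>R c32) (c *\<^sub>R M) (c *\<^sub>R c34) (c * a41) (c * a42) (c *\<^sub>R r43) (c * a44) i j"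
  by (cases i; cases j; simp add: blockm_def)
lemma blockm_uminus: "- blockm a11 a12 r13 a14 a21 a22 r23 a24 c31 c32 M c34 a41 a42 r43 a44 i j = blockm (- a11) (- a12) (- r13) (- a14) (- a21) (- a22) (- r23) (- a24) (- c31) (- c32) (- M) (- c34) (- a41) (- a42) (- r43) (- a44) i j"
  by (cases i; cases j; simp add: blockm_def)
lemma comm_blockm: "comm (blockm a11 a12 r13 a14 a21 a22 r23 a24 c31 c32 M c34 a41 a42 r43 a44) (blockm b11 b12 s13 b14 b21 b22 s23 b24 d31 d32 N d34 b41 b42 s43 b44) = (\<lambda>i j. mmul (blockm a11 a12 r13 a14 a21 a22 r23 a24 c31 c32 M c34 a41 a42 r43 a44) (blockm b11 b12 s13 b14 b21 b22 s23 b24 d31 d32 N d34 b41 b42 s43 b44) i j - mmul (blockm b11 b12 s13 b14 b21 b22 s23 b24 d31 d32 N d34 b41 b42 s43 b44) (blockm a11 a12 r13 a14 a21 a22 r23 a24 c31 c32 M c34 a41 a42 r43 a44) i j)"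
  by (simp add: comm_def)

lemma vnth_deriv: "(f has_vector_derivative f') (at z) \<Longrightarrow> ((\<lambda>t. f t $ k) has_real_derivative f' $ k) (at z)"
  unfolding has_real_derivative_iff_has_vector_derivative
  by (rule bounded_linear.has_vector_derivative[OF bounded_linear_vec_nth])

lemma mnth_deriv: "(f has_vector_derivative f') (at z) \<Longrightarrow> ((\<lambda>t. f t $ k $ l) has_real_derivative f' $ k $ l) (at z)"
  unfolding has_real_derivative_iff_has_vector_derivative
  by (rule bounded_linear.has_vector_derivative[OF bounded_linear_vec_nth],
      rule bounded_linear.has_vector_derivative[OF bounded_linear_vec_nth])

lemma blockm_deriv:
  assumes "(fa11 has_real_derivative da11) (at z)"
    and "(fa12 has_real_derivative da12) (at z)"
    and "(fr13 has_vector_derivative dr13) (at z)"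
    and "(fa14 has_real_derivative da14) (at z)"
    and "(fa21 has_real_derivative da21) (at z)"
    and "(fa22 has_real_derivative da22) (at z)"
    and "(fr23 has_vector_derivative dr23) (at z)"
    and "(fa24 has_real_derivative da24) (at z)"
    and "(fc31 has_vector_derivative dc31) (at z)"
    and "(fc32 has_vector_derivative dc32) (at z)"
    and "(fM has_vector_derivative dM) (at z)"
    and "(fc34 has_vector_derivative dc34) (at z)"
    and "(fa41 has_real_derivative da41) (at z)"
    and "(fa42 has_real_derivative da42) (at z)"
    and "(fr43 has_vector_derivative dr43) (at z)"
    and "(fa44 has_real_derivative da44) (at z)"
  shows "((\<lambda>t. blockm (fa11 t) (fa12 t) (fr13 t) (fa14 t) (fa21 t) (fa22 t) (fr23 t) (fa24 t) (fc31 t) (fc32 t) (fM t) (fc34 t) (fa41 t) (fa42 t) (fr43 t) (fa44 t) i j) has_real_derivative blockm da11 da12 dr13 da14 da21 da22 dr23 da24 dc31 dc32 dM dc34 da41 da42 dr43 da44 i j) (at z)"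
  using assms by (cases i; cases j; simp add: blockm_def vnth_deriv mnth_deriv)

lemma inner_deriv: "(f has_vector_derivative f') (at z) \<Longrightarrow> (g has_vector_derivative g') (at z) \<Longrightarrow>
   ((\<lambda>t. inner (f t) (g t)) has_real_derivative inner (f z) g' + inner f' (g z)) (at z)"
  unfolding has_real_derivative_iff_has_vector_derivative
  by (rule bounded_bilinear.has_vector_derivative[OF bounded_bilinear_inner])

lemma skew_vm: "transpose A = - A \<Longrightarrow> (x::real^'n::finite) v* A = - (A *v x)"
proof -
  assume h: "transpose A = - A"
  have "x v* A = transpose A *v x" by simp
  also have "\<dots> = (- A) *v x" using h by simp
  also have "\<dots> = - (A *v x)" by (simp add: vec_eq_iff matrix_vector_mult_def sum_negf)
  finally show ?thesis .
qed

lemma blockm_eqI: "a11 = b11 \<Longrightarrow> a12 = b12 \<Longrightarrow> r13 = s13 \<Longrightarrow> a14 = b14 \<Longrightarrow> a21 = b21 \<Longrightarrow> a22 = b22 \<Longrightarrow> r23 = s23 \<Longrightarrow> a24 = b24 \<Longrightarrow> c31 = d31 \<Longrightarrow> c32 = d32 \<Longrightarrow> M = N \<Longrightarrow> c34 = d34 \<Longrightarrow> a41 = b41 \<Longrightarrow> a42 = b42 \<Longrightarrow> r43 = s43 \<Longrightarrow> a44 = b44 \<Longrightarrow> blockm a11 a12 r13 a14 a21 a22 r23 a24 c31 c32 M c34 a41 a42 r43 a44 i j = blockm b11 b12 s13 b14 b21 b22 s23 b24 d31 d32 N d34 b41 b42 s43 b44 i j"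
  by simp

lemma mv_neg: "(- A) *v (x::real^'n::finite) = - (A *v x)"
  by (simp add: vec_eq_iff matrix_vector_mult_def sum_negf)
lemma vm_neg: "(x::real^'n::finite) v* (- A) = - (x v* A)"
  by (simp add: vec_eq_iff vector_matrix_mult_def sum_negf)
lemma mv_scale: "(c *\<^sub>R A) *v (x::real^'n::finite) = c *\<^sub>R (A *v x)"
  by (simp add: vec_eq_iff matrix_vector_mult_def sum_distrib_left algebra_simps)
lemma vm_scale: "(x::real^'n::finite) v* (c *\<^sub>R A) = c *\<^sub>R (x v* A)"
  by (simp add: vec_eq_iff vector_matrix_mult_def sum_distrib_left algebra_simps)



lemma partA:
  fixes A :: "real^'n::finite^'n" and \<beta> :: real
  assumes skew: "transpose A = - A"
  and hu: "(u has_real_derivative u1 z) (at z)" and hu1: "(u1 has_real_derivative u2 z) (at z)"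
  and hv: "(v has_vector_derivative v1 z) (at z)" and hv1: "(v1 has_vector_derivative v2 z) (at z)"
  and hv2: "(v2 has_vector_derivative v3 z) (at z)"
  and e1: "u2 z = 3/2 * (u z)^2 - 3/2 * inner (v z) (v z) + \<beta>"
  and e2: "v3 z = (3 * u z) *\<^sub>R v1 z + (3 * u1 z) *\<^sub>R v z + A *v v z"
  shows "((\<lambda>t. \<zeta>^3 * B0 i j + \<zeta>^2 * B1 (u t) (v t) i j + \<zeta> * B2 (u t) (u1 t) (v t) (v1 t) i j
               + B3ab A \<beta> (u t) (u1 t) (v t) (v1 t) (v2 t) i j)
         has_real_derivative
           comm (Bfull (u z) (v z) \<zeta>)
             (\<lambda>i j. \<zeta>^3 * B0 i j + \<zeta>^2 * B1 (u z) (v z) i j + \<zeta> * B2 (u z) (u1 z) (v z) (v1 z) i j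
               + B3ab A \<beta> (u z) (u1 z) (v z) (v1 z) (v2 z) i j) i j) (at z)"
  apply (simp only: B0_def B1_def B2_def B3ab_def Let_def Bfull_def blockm_scale blockm_add comm_blockm mmul_blockm blockm_diff)
  apply simp
  apply (rule DERIV_cong[OF blockm_deriv])
  apply (rule inner_deriv hu hu1 hv hv1 hv2 derivative_eq_intros refl | (simp; fail))+
  apply (rule blockm_eqI)
  apply (simp_all add: e1 e2 skew_vm[OF skew] mv_neg vm_neg mv_scale vm_scale power3_eq_cube power4_eq_xxxx inner_commute algebra_simps power2_eq_square vec_eq_iff outer_def inner_simps)
  done

lemma mat_mv: "mat c *v (x::real^'n::finite) = c *\<^sub>R x"
  by (simp add: vec_eq_iff matrix_vector_mult_def mat_def if_distrib if_distribR cong del: if_weak_cong)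

lemma deriv_Bfull: "deriv (\<lambda>\<xi>. Bfull a b \<xi> i j) \<zeta> = B0 i j"
  unfolding Bfull_def
  by (rule DERIV_imp_deriv) (auto intro!: derivative_eq_intros)

lemma partB:
  fixes A :: "real^'n::finite^'n"
  assumes skew: "transpose A = - A"
  and hu: "(u has_real_derivative u1 z) (at z)" and hu1: "(u1 has_real_derivative u2 z) (at z)"
  and hv: "(v has_vector_derivative v1 z) (at z)" and hv1: "(v1 has_vector_derivative v2 z) (at z)"
  and hv2: "(v2 has_vector_derivative v3 z) (at z)"
  and e1: "u2 z = 3/2 * (u z)^2 - 3/2 * inner (v z) (v z) + z"
  and e2: "v3 z = (3 * u z) *\<^sub>R v1 z + (3 * u1 z) *\<^sub>R v z + A *v v z"
  shows "((\<lambda>t. \<zeta>^4 * B0 i j + \<zeta>^3 * B1 (u t) (v t) i j + \<zeta>^2 * B2 (u t) (u1 t) (v t) (v1 t) i j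
               + \<zeta> * B3ab A t (u t) (u1 t) (v t) (v1 t) (v2 t) i j + B4 i j)
         has_real_derivative
           deriv (\<lambda>\<xi>. Bfull (u z) (v z) \<xi> i j) \<zeta> +
           comm (Bfull (u z) (v z) \<zeta>)
             (\<lambda>i j. \<zeta>^4 * B0 i j + \<zeta>^3 * B1 (u z) (v z) i j + \<zeta>^2 * B2 (u z) (u1 z) (v z) (v1 z) i j
               + \<zeta> * B3ab A z (u z) (u1 z) (v z) (v1 z) (v2 z) i j + B4 i j) i j) (at z)"
  apply (simp only: deriv_Bfull)
  apply (simp only: B0_def B1_def B2_def B3ab_def B4_def Let_def Bfull_def blockm_scale blockm_add comm_blockm mmul_blockm blockm_diff)
  apply simp
  apply (rule DERIV_cong[OF blockm_deriv])
  apply (rule inner_deriv hu hu1 hv hv1 hv2 derivative_eq_intros refl | (simp; fail))+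
  apply (rule blockm_eqI)
  apply (simp_all add: e1 e2 skew_vm[OF skew] mv_neg vm_neg mv_scale vm_scale power3_eq_cube power4_eq_xxxx inner_commute algebra_simps power2_eq_square vec_eq_iff outer_def inner_simps)
  done

lemma partC:
  fixes A :: "real^'n::finite^'n"
  assumes skew: "transpose A = - A" and nz: "\<zeta> \<noteq> 0"
  and hu: "(u has_real_derivative u1 z) (at z)" and hu1: "(u1 has_real_derivative u2 z) (at z)"
  and hu2: "(u2 has_real_derivative u3 z) (at z)"
  and hv: "(v has_vector_derivative v1 z) (at z)" and hv1: "(v1 has_vector_derivative v2 z) (at z)"
  and hv2: "(v2 has_vector_derivative v3 z) (at z)"
  and e1: "u3 z = 3 * u z * u1 z - 3 * inner (v z) (v1 z) + z * u1 z + 2 * u z"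
  and e2: "v3 z = (3 * u z) *\<^sub>R v1 z + (3 * u1 z) *\<^sub>R v z + z *\<^sub>R v1 z
                     + (A + mat 2) *v v z"
  shows "((\<lambda>t. - (\<zeta> - t / \<zeta>) * Bfull (u t) (v t) \<zeta> i j - B2 (u t) (u1 t) (v t) (v1 t) i j
               - (1 / \<zeta>) * B3c A (u t) (u1 t) (u2 t) (v t) (v1 t) (v2 t) i j)
         has_real_derivative
           deriv (\<lambda>\<xi>. Bfull (u z) (v z) \<xi> i j) \<zeta> +
           comm (Bfull (u z) (v z) \<zeta>)
             (\<lambda>i j. - (\<zeta> - z / \<zeta>) * Bfull (u z) (v z) \<zeta> i j - B2 (u z) (u1 z) (v z) (v1 z) i j
               - (1 / \<zeta>) * B3c A (u z) (u1 z) (u2 z) (v z) (v1 z) (v2 z) i j) i j) (at z)"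
  apply (simp only: deriv_Bfull)
  apply (simp only: B0_def B1_def B2_def B3c_def Let_def Bfull_def blockm_scale blockm_add comm_blockm mmul_blockm blockm_diff)
  apply (simp add: nz)
  apply (rule DERIV_cong[OF blockm_deriv])
  apply (rule inner_deriv hu hu1 hu2 hv hv1 hv2 nz derivative_eq_intros refl | (simp add: nz; fail))+
  apply (rule blockm_eqI)
  apply (simp_all add: nz e1 e2 skew_vm[OF skew] mv_neg vm_neg mv_scale vm_scale power3_eq_cube power4_eq_xxxx inner_commute field_simps mat_mv matrix_vector_mult_add_rdistrib power2_eq_square vec_eq_iff outer_def inner_simps)
  done



theorem proposition5:
  fixes A :: "real^'n::finite^'n" and \<beta> :: real
  assumes skew: "transpose A = - A"
  shows
  \<comment> \<open>(a) isospectral Lax pair\<close>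
  "(\<forall>(S::real set) (u::real\<Rightarrow>real) u1 u2 (v::real\<Rightarrow>real^'n) v1 v2 v3.
      open S \<and>
      (\<forall>z\<in>S. (u has_real_derivative u1 z) (at z) \<and> (u1 has_real_derivative u2 z) (at z) \<and>
              (v has_vector_derivative v1 z) (at z) \<and> (v1 has_vector_derivative v2 z) (at z) \<and>
              (v2 has_vector_derivative v3 z) (at z) \<and>
              u2 z = 3/2 * (u z)^2 - 3/2 * inner (v z) (v z) + \<beta> \<and>
              v3 z = (3 * u z) *\<^sub>R v1 z + (3 * u1 z) *\<^sub>R v z + A *v v z)
      \<longrightarrow>
      (\<forall>z\<in>S. \<forall>\<zeta>::real. \<forall>i j.
        ((\<lambda>t. \<zeta>^3 * B0 i j + \<zeta>^2 * B1 (u t) (v t) i j + \<zeta> * B2 (u t) (u1 t) (v t) (v1 t) i j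
               + B3ab A \<beta> (u t) (u1 t) (v t) (v1 t) (v2 t) i j)
         has_real_derivative
           comm (Bfull (u z) (v z) \<zeta>)
             (\<lambda>i j. \<zeta>^3 * B0 i j + \<zeta>^2 * B1 (u z) (v z) i j + \<zeta> * B2 (u z) (u1 z) (v z) (v1 z) i j
               + B3ab A \<beta> (u z) (u1 z) (v z) (v1 z) (v2 z) i j) i j) (at z)))
   \<and>
  \<comment> \<open>(b) isomonodromic Lax pair\<close>
   (\<forall>(S::real set) (u::real\<Rightarrow>real) u1 u2 (v::real\<Rightarrow>real^'n) v1 v2 v3.
      open S \<and>
      (\<forall>z\<in>S. (u has_real_derivative u1 z) (at z) \<and> (u1 has_real_derivative u2 z) (at z) \<and>
              (v has_vector_derivative v1 z) (at z) \<and> (v1 has_vector_derivative v2 z) (at z) \<and>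
              (v2 has_vector_derivative v3 z) (at z) \<and>
              u2 z = 3/2 * (u z)^2 - 3/2 * inner (v z) (v z) + z \<and>
              v3 z = (3 * u z) *\<^sub>R v1 z + (3 * u1 z) *\<^sub>R v z + A *v v z)
      \<longrightarrow>
      (\<forall>z\<in>S. \<forall>\<zeta>::real. \<forall>i j.
        ((\<lambda>t. \<zeta>^4 * B0 i j + \<zeta>^3 * B1 (u t) (v t) i j + \<zeta>^2 * B2 (u t) (u1 t) (v t) (v1 t) i j
               + \<zeta> * B3ab A t (u t) (u1 t) (v t) (v1 t) (v2 t) i j + B4 i j)
         has_real_derivative
           deriv (\<lambda>\<xi>. Bfull (u z) (v z) \<xi> i j) \<zeta> +
           comm (Bfull (u z) (v z) \<zeta>)
             (\<lambda>i j. \<zeta>^4 * B0 i j + \<zeta>^3 * B1 (u z) (v z) i j + \<zeta>^2 * B2 (u z) (u1 z) (v z) (v1 z) i j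
               + \<zeta> * B3ab A z (u z) (u1 z) (v z) (v1 z) (v2 z) i j + B4 i j) i j) (at z)))
   \<and>
  \<comment> \<open>(c) isomonodromic Lax pair\<close>
   (\<forall>(S::real set) (u::real\<Rightarrow>real) u1 u2 u3 (v::real\<Rightarrow>real^'n) v1 v2 v3.
      open S \<and>
      (\<forall>z\<in>S. (u has_real_derivative u1 z) (at z) \<and> (u1 has_real_derivative u2 z) (at z) \<and>
              (u2 has_real_derivative u3 z) (at z) \<and>
              (v has_vector_derivative v1 z) (at z) \<and> (v1 has_vector_derivative v2 z) (at z) \<and>
              (v2 has_vector_derivative v3 z) (at z) \<and>
              u3 z = 3 * u z * u1 z - 3 * inner (v z) (v1 z) + z * u1 z + 2 * u z \<and>
              v3 z = (3 * u z) *\<^sub>R v1 z + (3 * u1 z) *\<^sub>R v z + z *\<^sub>R v1 z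
                     + (A + mat 2) *v v z)
      \<longrightarrow>
      (\<forall>z\<in>S. \<forall>\<zeta>::real. \<zeta> \<noteq> 0 \<longrightarrow> (\<forall>i j.
        ((\<lambda>t. - (\<zeta> - t / \<zeta>) * Bfull (u t) (v t) \<zeta> i j - B2 (u t) (u1 t) (v t) (v1 t) i j
               - (1 / \<zeta>) * B3c A (u t) (u1 t) (u2 t) (v t) (v1 t) (v2 t) i j)
         has_real_derivative
           deriv (\<lambda>\<xi>. Bfull (u z) (v z) \<xi> i j) \<zeta> +
           comm (Bfull (u z) (v z) \<zeta>)
             (\<lambda>i j. - (\<zeta> - z / \<zeta>) * Bfull (u z) (v z) \<zeta> i j - B2 (u z) (u1 z) (v z) (v1 z) i j
               - (1 / \<zeta>) * B3c A (u z) (u1 z) (u2 z) (v z) (v1 z) (v2 z) i j) i j) (at z))))"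
    apply (intro conjI)
    apply (intro allI impI ballI; rule partA[OF skew]; auto)
   apply (intro allI impI ballI; rule partB[OF skew]; auto)
  apply (intro allI impI ballI; rule partC[OF skew]; auto)
  done

end
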